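(* Let an instance of MWSBP be given, let $O_1,\ldots,O_q$ be the bins of an optimal solution, and let $B_1,\ldots,B_p$ be the bins output by the Knapsack-Batching algorithm on this instance. Set $B_j:=\emptyset$ for $j\ge p+1$ and $O_j:=\emptyset$ for $j\ge q+1$. Let $\alpha\ge 1$. If for all $k\in\{1,\ldots,q\}$ \[ w(B_1)+w(B_2)+\cdots+w(B_{\lfloor \alpha k\rfloor}) \;\ge\; w(O_1)+w(O_2)+\cdots+w(O_k), \] then $\Phi(B_1,\ldots,B_p)\le \alpha\cdot \Phi(O_1,\ldots,O_q)$, i.e. $\mathtt{KB}\le \alpha\cdot \mathtt{OPT}$.
   Context: Min-Weighted Sum Bin Packing (MWSBP): an instance consists of $n$ items with sizes $s_i\in(0,1]$ and weights $w_i>0$, $i\in[n]=\{1,\ldots,n\}$. For a vector $x\in\mathbb{R}^n$ and $S\subseteq[n]$ write $x(S)=\sum_{i\in S}x_i$. A feasible solution is a partition of $[n]$ into bins $B_1,\ldots,B_p$ with $s(B_k)\le 1$ for all $k$; its cost is $\Phi(B_1,\ldots,B_p)=\sum_{k=1}^p k\, w(B_k)$. $\mathtt{OPT}$ denotes the minimum cost. The Knapsack-Batching algorithm ($\mathtt{KB}$): for $k=1,2,\ldots$ while items remain, let $B_k$ be a subset of the remaining items $[n]\setminus(B_1\cup\cdots\cup B_{k-1})$ of maximum total weight $w(B_k)$ subject to $s(B_k)\le 1$ (ties broken arbitrarily). $\mathtt{KB}$ also denotes the cost of its output. *)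

theory Defs
  imports Main "HOL-Library.Multiset" Complex_Main
begin

text \<open>An MWSBP instance: items 1..n, sizes s i in (0,1], weights w i > 0.
A solution is a list of bins (bin number k is the k-th list element, 1-indexed).\<close>

definition valid_instance :: "nat \<Rightarrow> (nat \<Rightarrow> real) \<Rightarrow> (nat \<Rightarrow> real) \<Rightarrow> bool" where
  "valid_instance n s w \<longleftrightarrow> (\<forall>i\<in>{1..n}. 0 < s i \<and> s i \<le> 1 \<and> 0 < w i)"

definition feasible :: "nat \<Rightarrow> (nat \<Rightarrow> real) \<Rightarrow> nat set list \<Rightarrow> bool" where
  "feasible n s Bs \<longleftrightarrow>
     (\<Union>(set Bs) = {1..n}) \<and>
     (\<forall>k<length Bs. Bs ! k \<noteq> {} \<and> sum s (Bs ! k) \<le> 1) \<and>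
     (\<forall>k<length Bs. \<forall>l<length Bs. k \<noteq> l \<longrightarrow> Bs ! k \<inter> Bs ! l = {})"

definition cost :: "(nat \<Rightarrow> real) \<Rightarrow> nat set list \<Rightarrow> real" where
  "cost w Bs = (\<Sum>k<length Bs. real (k + 1) * sum w (Bs ! k))"

definition optimal :: "nat \<Rightarrow> (nat \<Rightarrow> real) \<Rightarrow> (nat \<Rightarrow> real) \<Rightarrow> nat set list \<Rightarrow> bool" where
  "optimal n s w Os \<longleftrightarrow> feasible n s Os \<and> (\<forall>Bs. feasible n s Bs \<longrightarrow> cost w Os \<le> cost w Bs)"

text \<open>Bs is a possible output of Knapsack-Batching (for some tie-breaking): the algorithm
runs while items remain, and in step k picks a maximum-weight subset of the remaining items
with total size at most 1.\<close>
definition KB_output :: "nat \<Rightarrow> (nat \<Rightarrow> real) \<Rightarrow> (nat \<Rightarrow> real) \<Rightarrow> nat set list \<Rightarrow> bool" where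
  "KB_output n s w Bs \<longleftrightarrow>
     (\<Union>(set Bs) = {1..n}) \<and>
     (\<forall>k<length Bs.
        let R = {1..n} - \<Union>(set (take k Bs)) in
          R \<noteq> {} \<and> Bs ! k \<subseteq> R \<and> sum s (Bs ! k) \<le> 1 \<and>
          (\<forall>S. S \<subseteq> R \<and> sum s S \<le> 1 \<longrightarrow> sum w S \<le> sum w (Bs ! k)))"

definition bin :: "nat set list \<Rightarrow> nat \<Rightarrow> nat set" where
  "bin Bs j = (if 1 \<le> j \<and> j \<le> length Bs then Bs ! (j - 1) else {})"

end

theory Submission
  imports Defs
begin

lemma bin_Suc: "k < length L \<Longrightarrow> bin L (Suc k) = L ! k"
  by (simp add: bin_def)

lemma bin_sub: "bin L j \<subseteq> \<Union>(set L)"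
proof (cases "1 \<le> j \<and> j \<le> length L")
  case True
  hence "j - 1 < length L" by auto
  hence "L ! (j-1) \<in> set L" by (rule nth_mem)
  thus ?thesis using True by (auto simp: bin_def)
qed (auto simp: bin_def)

lemma sum_bins:
  assumes U: "\<Union>(set L) = U" and fin: "finite U"
    and dis: "\<forall>k<length L. \<forall>l<length L. k\<noteq>l \<longrightarrow> L!k \<inter> L!l = {}"
  shows "(\<Sum>j=1..length L. sum w (bin L j)) = sum w U"
proof -
  have "{1..length L} = Suc ` {..<length L}" by (simp add: image_Suc_lessThan)
  hence "(\<Sum>j=1..length L. sum w (bin L j)) = (\<Sum>k<length L. sum w (bin L (Suc k)))"
    by (simp add: sum.reindex)
  also have "\<dots> = (\<Sum>k<length L. sum w (L!k))" by (intro sum.cong) (auto simp: bin_Suc)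
  also have "\<dots> = sum w (\<Union>((!) L ` {..<length L}))"
  proof (rule sum.UNION_disjoint[symmetric])
    show "finite {..<length L}" by simp
    show "\<forall>i\<in>{..<length L}. finite (L ! i)"
    proof
      fix i assume "i \<in> {..<length L}"
      hence "L ! i \<in> set L" by simp
      hence "L ! i \<subseteq> U" using U by blast
      thus "finite (L ! i)" using fin finite_subset by blast
    qed
    show "\<forall>i\<in>{..<length L}. \<forall>j\<in>{..<length L}. i \<noteq> j \<longrightarrow> L ! i \<inter> L ! j = {}"
      using dis by auto
  qed
  also have "(!) L ` {..<length L} = set L" by (auto simp: in_set_conv_nth)
  hence "\<Union>((!) L ` {..<length L}) = U" using U by simp
  finally show ?thesis .
qed

lemma cost_eq: "cost w L = (\<Sum>j=1..length L. real j * sum w (bin L j))"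
proof -
  have e: "{1..length L} = Suc ` {..<length L}" by (simp add: image_Suc_lessThan)
  have "(\<Sum>j=1..length L. real j * sum w (bin L j)) = (\<Sum>k<length L. real (Suc k) * sum w (bin L (Suc k)))"
    unfolding e by (rule sum.reindex_cong[where l=Suc]) auto
  also have "\<dots> = cost w L" unfolding cost_def by (intro sum.cong) (auto simp: bin_Suc)
  finally show ?thesis ..
qed

lemma tele: "(\<Sum>j=1..p. real j * g j) = (\<Sum>t<p. \<Sum>j=Suc t..p. (g j :: real))"
proof (induction p)
  case 0 then show ?case by simp
next
  case (Suc p)
  have "(\<Sum>t<Suc p. \<Sum>j=Suc t..Suc p. g j) = (\<Sum>t<p. \<Sum>j=Suc t..Suc p. g j) + g (Suc p)"
    by simp
  also have "(\<Sum>t<p. \<Sum>j=Suc t..Suc p. g j) = (\<Sum>t<p. (\<Sum>j=Suc t..p. g j) + g (Suc p))"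
    by (intro sum.cong) auto
  also have "\<dots> = (\<Sum>t<p. \<Sum>j=Suc t..p. g j) + real p * g (Suc p)"
    by (simp add: sum.distrib)
  finally show ?case using Suc by (simp add: algebra_simps)
qed

theorem proposition1:
  fixes n :: nat and s w :: "nat \<Rightarrow> real" and Os Bs :: "nat set list" and \<alpha> :: real
  assumes "valid_instance n s w"
    and "optimal n s w Os"
    and "KB_output n s w Bs"
    and "\<alpha> \<ge> 1"
    and "\<forall>k\<in>{1..length Os}.
           (\<Sum>j=1..nat \<lfloor>\<alpha> * real k\<rfloor>. sum w (bin Bs j)) \<ge> (\<Sum>j=1..k. sum w (bin Os j))"
  shows "cost w Bs \<le> \<alpha> * cost w Os"
proof -
  note V = assms(1)[unfolded valid_instance_def]
  have FO: "feasible n s Os" using assms(2) optimal_def by blast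
  note KB = assms(3)[unfolded KB_output_def]
  define p where "p = length Bs"
  define q where "q = length Os"
  define b where "b j = sum w (bin Bs j)" for j
  define ov where "ov j = sum w (bin Os j)" for j
  define f where "f j = nat \<lfloor>\<alpha> * real j\<rfloor>" for j
  have hyp: "\<And>k. k \<in> {1..q} \<Longrightarrow> (\<Sum>j=1..f k. b j) \<ge> (\<Sum>j=1..k. ov j)"
    using assms(5) unfolding b_def ov_def f_def q_def by blast
  have bnn: "\<And>j. b j \<ge> 0"
  proof -
    fix j
    have "bin Bs j \<subseteq> {1..n}" using bin_sub KB by metis
    thus "b j \<ge> 0" unfolding b_def using V by (intro sum_nonneg) (auto simp: less_imp_le)
  qed
  have onn: "\<And>j. ov j \<ge> 0"
  proof -
    fix j
    have "bin Os j \<subseteq> {1..n}" using bin_sub FO unfolding feasible_def by metis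
    thus "ov j \<ge> 0" unfolding ov_def using V by (intro sum_nonneg) (auto simp: less_imp_le)
  qed
  have WO: "(\<Sum>j=1..q. ov j) = sum w {1..n}"
    unfolding ov_def q_def using FO unfolding feasible_def by (intro sum_bins) auto
  have disB: "\<forall>k<length Bs. \<forall>l<length Bs. k\<noteq>l \<longrightarrow> Bs!k \<inter> Bs!l = {}"
  proof (intro allI impI)
    fix k l assume kl: "k < length Bs" "l < length Bs" "k \<noteq> l"
    have gen: "Bs!k \<inter> Bs!l = {}" if "k < l" "l < length Bs" for k l
    proof -
      have "Bs!l \<subseteq> {1..n} - \<Union>(set (take l Bs))" using KB that by (auto simp: Let_def)
      moreover have "take l Bs ! k \<in> set (take l Bs)" using that by (intro nth_mem) simp
      moreover have "take l Bs ! k = Bs ! k" using that by simp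
      ultimately show ?thesis by blast
    qed
    show "Bs!k \<inter> Bs!l = {}"
      using kl gen[of k l] gen[of l k] by (cases "k < l") (auto simp: Int_commute)
  qed
  have WB: "(\<Sum>j=1..p. b j) = sum w {1..n}"
    unfolding b_def p_def using KB disB by (intro sum_bins) auto
  have fmono: "\<And>i j. i \<le> j \<Longrightarrow> f i \<le> f j"
    unfolding f_def using assms(4)
    by (intro nat_mono floor_mono mult_left_mono) auto
  have f0: "f 0 = 0" by (simp add: f_def)
  have key: "(\<Sum>j=Suc t..p. b j) \<le> (\<Sum>j\<in>{j\<in>{1..q}. t < f j}. ov j)" if tp: "t < p" for t
  proof -
    define K where "K = {j\<in>{0..q}. f j \<le> t}"
    define k where "k = Max K"
    have Kfin: "finite K" and K0: "0 \<in> K" using f0 by (auto simp: K_def)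
    have kK: "k \<in> K" using Kfin K0 k_def Max_in by blast
    have kq: "k \<le> q" and fk: "f k \<le> t" using kK by (auto simp: K_def)
    have setE: "{j\<in>{1..q}. t < f j} = {Suc k..q}"
    proof (intro set_eqI iffI)
      fix j assume "j \<in> {j\<in>{1..q}. t < f j}"
      hence j: "j \<le> q" "t < f j" by auto
      have "\<not> j \<le> k" using fmono[of j k] fk j by linarith
      thus "j \<in> {Suc k..q}" using j by auto
    next
      fix j assume j: "j \<in> {Suc k..q}"
      have "\<not> f j \<le> t"
      proof
        assume "f j \<le> t"
        hence "j \<in> K" using j by (auto simp: K_def)
        hence "j \<le> k" using Kfin k_def by simp
        thus False using j by simp
      qed
      thus "j \<in> {j\<in>{1..q}. t < f j}" using j by auto
    qed
    have lowB: "(\<Sum>j=1..t. b j) \<ge> (\<Sum>j=1..k. ov j)"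
    proof (cases "k = 0")
      case True thus ?thesis using bnn by (simp add: sum_nonneg)
    next
      case False
      hence "(\<Sum>j=1..k. ov j) \<le> (\<Sum>j=1..f k. b j)" using hyp kq by simp
      also have "\<dots> \<le> (\<Sum>j=1..t. b j)" using fk bnn by (intro sum_mono2) auto
      finally show ?thesis .
    qed
    have sB: "(\<Sum>j=1..p. b j) = (\<Sum>j=1..t. b j) + (\<Sum>j=Suc t..p. b j)"
    proof -
      have e: "{1..p} = {1..t} \<union> {Suc t..p}" using tp by auto
      show ?thesis unfolding e by (rule sum.union_disjoint) auto
    qed
    have sO: "(\<Sum>j=1..q. ov j) = (\<Sum>j=1..k. ov j) + (\<Sum>j=Suc k..q. ov j)"
    proof -
      have e: "{1..q} = {1..k} \<union> {Suc k..q}" using kq by auto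
      show ?thesis unfolding e by (rule sum.union_disjoint) auto
    qed
    show ?thesis unfolding setE using sB sO WB WO lowB by linarith
  qed
  have "cost w Bs = (\<Sum>j=1..p. real j * b j)"
    unfolding cost_eq p_def b_def ..
  also have "\<dots> = (\<Sum>t<p. \<Sum>j=Suc t..p. b j)" by (rule tele)
  also have "\<dots> \<le> (\<Sum>t<p. \<Sum>j\<in>{j\<in>{1..q}. t < f j}. ov j)" using key by (intro sum_mono) auto
  also have "\<dots> = (\<Sum>t<p. \<Sum>j=1..q. if t < f j then ov j else 0)"
    by (rule sum.cong[OF refl], rule sum.inter_filter) simp
  also have "\<dots> = (\<Sum>j=1..q. \<Sum>t<p. if t < f j then ov j else 0)" by (rule sum.swap)
  also have "\<dots> \<le> (\<Sum>j=1..q. real j * \<alpha> * ov j)"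
  proof (intro sum_mono)
    fix j assume "j \<in> {1..q}"
    have "(\<Sum>t<p. if t < f j then ov j else 0) = (\<Sum>t\<in>{t\<in>{..<p}. t < f j}. ov j)"
      by (rule sum.inter_filter[symmetric]) simp
    also have "\<dots> \<le> (\<Sum>t\<in>{..<f j}. ov j)" using onn by (intro sum_mono2) auto
    also have "\<dots> = real (f j) * ov j" by simp
    also have "\<dots> \<le> real j * \<alpha> * ov j"
    proof (intro mult_right_mono onn)
      have "\<alpha> * real j \<ge> 0" using assms(4) by simp
      hence "real (f j) \<le> \<alpha> * real j" unfolding f_def
        by simp
      thus "real (f j) \<le> real j * \<alpha>" by (simp add: mult.commute)
    qed
    finally show "(\<Sum>t<p. if t < f j then ov j else 0) \<le> real j * \<alpha> * ov j" .
  qed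
  also have "\<dots> = \<alpha> * (\<Sum>j=1..q. real j * ov j)" by (simp add: sum_distrib_left algebra_simps)
  also have "(\<Sum>j=1..q. real j * ov j) = cost w Os"
    unfolding cost_eq q_def ov_def ..
  finally show ?thesis .
qed

end
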